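(* For a liner $X$ the following are equivalent: (1) $X$ is modular; (2) $X$ is strongly regular; (3) $X$ contains no two disjoint coplanar lines.
   Context: A liner is a set $X$ of points with a family of subsets called lines such that any two distinct points lie in a unique line and every line contains at least two points. For distinct $x,y$, $\overline{xy}$ is the line through them. A set is flat if it contains $\overline{xy}$ for all its distinct points $x,y$; $\overline A$ is the smallest flat containing $A$. The rank $\|A\|$ is the smallest cardinality of $B\subseteq X$ with $A\subseteq\overline B$. A plane is a flat of rank $3$; two lines are coplanar if both are contained in some plane. $X$ is modular if $\|A\cap B\|+\|A\cup B\|=\|A\|+\|B\|$ for all flats $A,B\subseteq X$. $X$ is strongly regular if for every nonempty flat $A\subseteq X$ and point $b\in X\setminus A$ we have $\overline{A\cup\{b\}}=\bigcup_{a\in A}\overline{ab}$. *)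

theory Defs
  imports Main
begin

definition liner :: "'a set \<Rightarrow> 'a set set \<Rightarrow> bool" where
  "liner X L \<longleftrightarrow>
     (\<forall>l\<in>L. l \<subseteq> X \<and> (\<exists>x y. x \<in> l \<and> y \<in> l \<and> x \<noteq> y)) \<and>
     (\<forall>x\<in>X. \<forall>y\<in>X. x \<noteq> y \<longrightarrow> (\<exists>!l. l \<in> L \<and> x \<in> l \<and> y \<in> l))"

definition line_through :: "'a set set \<Rightarrow> 'a \<Rightarrow> 'a \<Rightarrow> 'a set" where
  "line_through L x y = (THE l. l \<in> L \<and> x \<in> l \<and> y \<in> l)"

definition flat :: "'a set \<Rightarrow> 'a set set \<Rightarrow> 'a set \<Rightarrow> bool" where
  "flat X L A \<longleftrightarrow> A \<subseteq> X \<and>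
     (\<forall>x\<in>A. \<forall>y\<in>A. x \<noteq> y \<longrightarrow> line_through L x y \<subseteq> A)"

definition flat_hull :: "'a set \<Rightarrow> 'a set set \<Rightarrow> 'a set \<Rightarrow> 'a set" where
  "flat_hull X L A = \<Inter>{F. flat X L F \<and> A \<subseteq> F}"

text \<open>B is a set of minimal cardinality among subsets of X whose flat hull contains A;
  thus the rank of A is the cardinal of B.\<close>
definition rank_base :: "'a set \<Rightarrow> 'a set set \<Rightarrow> 'a set \<Rightarrow> 'a set \<Rightarrow> bool" where
  "rank_base X L A B \<longleftrightarrow> B \<subseteq> X \<and> A \<subseteq> flat_hull X L B \<and>
     (\<forall>C. C \<subseteq> X \<and> A \<subseteq> flat_hull X L C \<longrightarrow> (card_of B, card_of C) \<in> ordLeq)"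

definition plane :: "'a set \<Rightarrow> 'a set set \<Rightarrow> 'a set \<Rightarrow> bool" where
  "plane X L P \<longleftrightarrow> flat X L P \<and> (\<exists>B. rank_base X L P B \<and> finite B \<and> card B = 3)"

definition coplanar :: "'a set \<Rightarrow> 'a set set \<Rightarrow> 'a set \<Rightarrow> 'a set \<Rightarrow> bool" where
  "coplanar X L l1 l2 \<longleftrightarrow> (\<exists>P. plane X L P \<and> l1 \<subseteq> P \<and> l2 \<subseteq> P)"

text \<open>Modularity: rank(A \<inter> B) + rank(A \<union> B) = rank A + rank B as cardinals,
  for all flats A, B (ranks represented by minimal spanning sets).\<close>
definition modular_liner :: "'a set \<Rightarrow> 'a set set \<Rightarrow> bool" where
  "modular_liner X L \<longleftrightarrow>
     (\<forall>A B BA BB BI BU. flat X L A \<and> flat X L B \<and>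
        rank_base X L A BA \<and> rank_base X L B BB \<and>
        rank_base X L (A \<inter> B) BI \<and> rank_base X L (A \<union> B) BU \<longrightarrow>
        (BNF_Cardinal_Arithmetic.csum (card_of BI) (card_of BU),
         BNF_Cardinal_Arithmetic.csum (card_of BA) (card_of BB)) \<in> ordIso)"

definition strongly_regular :: "'a set \<Rightarrow> 'a set set \<Rightarrow> bool" where
  "strongly_regular X L \<longleftrightarrow>
     (\<forall>A b. flat X L A \<and> A \<noteq> {} \<and> b \<in> X - A \<longrightarrow>
        flat_hull X L (A \<union> {b}) = (\<Union>a\<in>A. line_through L a b))"

definition no_disjoint_coplanar_lines :: "'a set \<Rightarrow> 'a set set \<Rightarrow> bool" where
  "no_disjoint_coplanar_lines X L \<longleftrightarrow>
     \<not> (\<exists>l1\<in>L. \<exists>l2\<in>L. coplanar X L l1 l2 \<and> l1 \<inter> l2 = {})"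

end

theory Submission
  imports Defs
begin
unbundle cardinal_syntax

lemma fin_ordLeq_iff:
  assumes "finite A" "finite B"
  shows "( |A| \<le>o |B| ) = (card A \<le> card B)"
proof
  assume "|A| \<le>o |B|"
  then obtain f where "inj_on f A" "f ` A \<subseteq> B" unfolding card_of_ordLeq[symmetric] by blast
  then show "card A \<le> card B" using assms card_inj_on_le by blast
next
  assume "card A \<le> card B"
  then obtain f where "inj_on f A" "f ` A \<subseteq> B" using assms card_le_inj by blast
  then show "|A| \<le>o |B|" unfolding card_of_ordLeq[symmetric] by blast
qed

lemma fin_ordIso_iff:
  assumes "finite A" "finite B"
  shows "( |A| =o |B| ) = (card A = card B)"
  using fin_ordLeq_iff[OF assms] fin_ordLeq_iff[OF assms(2,1)]
  by (metis card_of_Well_order le_antisym nle_le ordIso_iff_ordLeq)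

lemma fin_le_inf: "finite A \<Longrightarrow> \<not> finite B \<Longrightarrow> |A| \<le>o |B|"
  using finite_ordLess_infinite[of "|A|" "|B|"] card_of_Well_order ordLess_imp_ordLeq
  by (metis Field_card_of)

locale lin =
  fixes X :: "'a set" and L :: "'a set set"
  assumes liner: "liner X L"
begin
unbundle cardinal_syntax

abbreviation "hull \<equiv> flat_hull X L"
abbreviation "ln \<equiv> line_through L"

lemma L_sub: "l \<in> L \<Longrightarrow> l \<subseteq> X"
  using liner unfolding liner_def by blast

lemma L_two: "l \<in> L \<Longrightarrow> \<exists>x y. x \<in> l \<and> y \<in> l \<and> x \<noteq> y"
  using liner unfolding liner_def by blast

lemma uniq_line:
  assumes "x \<in> X" "y \<in> X" "x \<noteq> y"
  shows "\<exists>!l. l \<in> L \<and> x \<in> l \<and> y \<in> l"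
proof -
  have "\<forall>x\<in>X. \<forall>y\<in>X. x \<noteq> y \<longrightarrow> (\<exists>!l. l \<in> L \<and> x \<in> l \<and> y \<in> l)"
    using liner unfolding liner_def by (rule conjunct2)
  then show ?thesis using assms by simp
qed

lemma ln_props:
  assumes "x \<in> X" "y \<in> X" "x \<noteq> y"
  shows "ln x y \<in> L" "x \<in> ln x y" "y \<in> ln x y"
proof -
  have "\<exists>!l. l \<in> L \<and> x \<in> l \<and> y \<in> l" using uniq_line assms by blast
  then have "ln x y \<in> L \<and> x \<in> ln x y \<and> y \<in> ln x y"
    unfolding line_through_def by (rule theI')
  then show "ln x y \<in> L" "x \<in> ln x y" "y \<in> ln x y" by auto
qed

lemma ln_sub: "x \<in> X \<Longrightarrow> y \<in> X \<Longrightarrow> x \<noteq> y \<Longrightarrow> ln x y \<subseteq> X"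
  using ln_props L_sub by blast

lemma ln_unique:
  assumes "l \<in> L" "x \<in> l" "y \<in> l" "x \<noteq> y"
  shows "ln x y = l"
proof -
  have xy: "x \<in> X" "y \<in> X" using assms L_sub by auto
  have "\<exists>!l. l \<in> L \<and> x \<in> l \<and> y \<in> l" using uniq_line xy assms(4) by blast
  then show ?thesis using assms ln_props[OF xy assms(4)] by blast
qed

lemma ln_sym: "x \<in> X \<Longrightarrow> y \<in> X \<Longrightarrow> x \<noteq> y \<Longrightarrow> ln x y = ln y x"
  using ln_unique ln_props by metis

lemma ln_eq:
  assumes "x \<in> X" "y \<in> X" "x \<noteq> y" "u \<in> ln x y" "v \<in> ln x y" "u \<noteq> v"
  shows "ln u v = ln x y"
  using ln_unique ln_props assms by metis

lemma flat_X: "flat X L X"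
  unfolding flat_def
proof (intro conjI ballI impI)
  fix x y assume "x \<in> X" "y \<in> X" "x \<noteq> y"
  then show "ln x y \<subseteq> X" by (rule ln_sub)
qed simp

lemma flat_ln: assumes "x \<in> X" "y \<in> X" "x \<noteq> y" shows "flat X L (ln x y)"
  unfolding flat_def
proof (intro conjI ballI impI)
  show "ln x y \<subseteq> X" using ln_sub[OF assms] .
  fix u v assume "u \<in> ln x y" "v \<in> ln x y" "u \<noteq> v"
  then show "ln u v \<subseteq> ln x y" using ln_eq[OF assms] by simp
qed

lemma flat_empty: "flat X L {}" unfolding flat_def by simp
lemma flat_single: "x \<in> X \<Longrightarrow> flat X L {x}" unfolding flat_def by simp

lemma flat_Inter: assumes "\<forall>F\<in>S. flat X L F" "S \<noteq> {}" shows "flat X L (\<Inter>S)"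
  unfolding flat_def
proof (intro conjI ballI impI)
  obtain F where "F \<in> S" using assms by blast
  then have "flat X L F" using assms(1) by blast
  then have "F \<subseteq> X" unfolding flat_def by (rule conjunct1)
  then show "\<Inter>S \<subseteq> X" using \<open>F \<in> S\<close> by (rule Inter_lower[THEN order_trans, rotated])
  fix x y assume xy: "x \<in> \<Inter>S" "y \<in> \<Inter>S" "x \<noteq> y"
  show "ln x y \<subseteq> \<Inter>S"
  proof (rule Inter_greatest)
    fix G assume "G \<in> S"
    then have "flat X L G" "x \<in> G" "y \<in> G" using assms(1) xy(1,2) by auto
    then show "ln x y \<subseteq> G" using xy(3) by (simp add: flat_def)
  qed
qed

lemma hull_flat: "A \<subseteq> X \<Longrightarrow> flat X L (hull A)"
  unfolding flat_hull_def using flat_X by (intro flat_Inter) auto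

lemma hull_sup: "A \<subseteq> hull A"
  unfolding flat_hull_def by auto

lemma hull_X: "A \<subseteq> X \<Longrightarrow> hull A \<subseteq> X"
  unfolding flat_hull_def using flat_X by auto

lemma hull_min: "flat X L F \<Longrightarrow> A \<subseteq> F \<Longrightarrow> hull A \<subseteq> F"
  unfolding flat_hull_def by auto

lemma hull_mono: "A \<subseteq> B \<Longrightarrow> B \<subseteq> X \<Longrightarrow> hull A \<subseteq> hull B"
  by (meson hull_flat hull_min hull_sup order_trans)

lemma hull_of_flat: "flat X L F \<Longrightarrow> hull F = F"
  by (simp add: hull_min hull_sup subset_antisym)

lemma hull_hull: "A \<subseteq> X \<Longrightarrow> hull (hull A) = hull A"
  by (simp add: hull_flat hull_of_flat)

lemma hull_Un_hull: "A \<subseteq> X \<Longrightarrow> S \<subseteq> X \<Longrightarrow> hull (hull A \<union> S) = hull (A \<union> S)"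
proof
  assume a: "A \<subseteq> X" "S \<subseteq> X"
  show "hull (hull A \<union> S) \<subseteq> hull (A \<union> S)"
    apply (rule hull_min) using a apply (simp add: hull_flat)
    using hull_mono[of A "A \<union> S"] hull_sup[of "A \<union> S"] a by auto
  show "hull (A \<union> S) \<subseteq> hull (hull A \<union> S)"
    apply (rule hull_mono) using hull_sup[of A] hull_X[of A] a by auto
qed

lemma hull_empty: "hull {} = {}"
  using hull_of_flat flat_empty by simp

lemma hull_single: "x \<in> X \<Longrightarrow> hull {x} = {x}"
  using hull_of_flat flat_single by simp

lemma ln_in_flat: "flat X L F \<Longrightarrow> x \<in> F \<Longrightarrow> y \<in> F \<Longrightarrow> x \<noteq> y \<Longrightarrow> ln x y \<subseteq> F"
  unfolding flat_def by simp

lemma hull_pair: "x \<in> X \<Longrightarrow> y \<in> X \<Longrightarrow> x \<noteq> y \<Longrightarrow> hull {x, y} = ln x y"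
proof
  assume a: "x \<in> X" "y \<in> X" "x \<noteq> y"
  show "hull {x, y} \<subseteq> ln x y" using a flat_ln ln_props hull_min by simp
  have "flat X L (hull {x,y})" using a hull_flat by simp
  then show "ln x y \<subseteq> hull {x, y}" using ln_in_flat hull_sup a by blast
qed


lemma card_le2_cases:
  assumes "finite C" "card C \<le> 2"
  shows "C = {} \<or> (\<exists>c. C = {c}) \<or> (\<exists>c d. c \<noteq> d \<and> C = {c, d})"
proof -
  have "card C = 0 \<or> card C = 1 \<or> card C = 2" using assms by linarith
  then show ?thesis using assms by (auto simp: card_1_singleton_iff card_2_iff)
qed

lemma small_coll:
  assumes "finite C" "card C \<le> 2" "C \<subseteq> X" "a1 \<in> hull C" "a2 \<in> hull C" "b \<in> hull C" "a1 \<noteq> a2"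
  shows "b \<in> ln a1 a2"
proof -
  consider "C = {}" | c where "C = {c}" | c d where "c \<noteq> d" "C = {c, d}"
    using card_le2_cases[OF assms(1,2)] by blast
  then show ?thesis
  proof cases
    case 1 then show ?thesis using assms hull_empty by simp
  next
    case 2 then show ?thesis using assms hull_single by simp
  next
    case 3
    then have h: "hull C = ln c d" "c \<in> X" "d \<in> X" using hull_pair assms by auto
    then show ?thesis using ln_eq[OF h(2,3) 3(1)] assms by (metis h(1))
  qed
qed

lemma rank_base_exists:
  assumes "A \<subseteq> X"
  shows "\<exists>B. rank_base X L A B"
proof -
  define R where "R = (\<lambda>C. |C| ) ` {C. C \<subseteq> X \<and> A \<subseteq> hull C}"
  have "A \<in> {C. C \<subseteq> X \<and> A \<subseteq> hull C}" using assms hull_sup[of A] by simp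
  then have "R \<noteq> {}" unfolding R_def by blast
  moreover have "\<forall>r\<in>R. Well_order r" unfolding R_def by (simp add: card_of_Well_order)
  ultimately obtain r where r: "r \<in> R" "\<forall>r'\<in>R. r \<le>o r'"
    using exists_minim_Well_order[of R] by blast
  then obtain C0 where C0: "r = |C0|" "C0 \<subseteq> X" "A \<subseteq> hull C0" unfolding R_def by blast
  have "\<forall>C. C \<subseteq> X \<and> A \<subseteq> hull C \<longrightarrow> |C0| \<le>o |C|"
  proof (intro allI impI)
    fix C assume "C \<subseteq> X \<and> A \<subseteq> hull C"
    then have "|C| \<in> R" unfolding R_def by simp
    then show "|C0| \<le>o |C|" using r(2) C0(1) by simp
  qed
  then have "rank_base X L A C0" unfolding rank_base_def using C0(2,3) by simp
  then show ?thesis by blast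
qed

lemma rank_base_line:
  assumes "x \<in> X" "y \<in> X" "x \<noteq> y"
  shows "rank_base X L (ln x y) {x, y}"
  unfolding rank_base_def
proof (intro conjI allI impI)
  show "{x, y} \<subseteq> X" using assms by simp
  show "ln x y \<subseteq> hull {x, y}" using hull_pair[OF assms] by simp
  fix C assume C: "C \<subseteq> X \<and> ln x y \<subseteq> hull C"
  show "|{x, y}| \<le>o |C|"
  proof (cases "finite C")
    case False
    have "finite {x, y}" by simp
    from fin_le_inf[OF this False] show ?thesis .
  next
    case True
    have xy: "{x, y} \<subseteq> hull C" using C ln_props[OF assms] by blast
    have "card {x,y} \<le> card C"
    proof (rule ccontr)
      assume "\<not> card {x, y} \<le> card C"
      then have "card C \<le> 1" using assms(3) by simp
      then have "C = {} \<or> (\<exists>c. C = {c})" using True card_le2_cases[of C] by auto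
      then have "hull C = C" using hull_empty hull_single C by auto
      then have "{x, y} \<subseteq> C" using xy by simp
      then have "card {x,y} \<le> card C" using True card_mono by blast
      then show False using \<open>\<not> card {x, y} \<le> card C\<close> by simp
    qed
    then show ?thesis using fin_ordLeq_iff[of "{x,y}" C] True by simp
  qed
qed

lemma plane_hull3:
  assumes "a1 \<in> X" "a2 \<in> X" "b \<in> X" "a1 \<noteq> a2" "b \<notin> ln a1 a2"
  shows "plane X L (hull {a1, a2, b})"
  unfolding plane_def
proof (intro conjI exI)
  show "flat X L (hull {a1, a2, b})" using assms hull_flat by simp
  have ne: "b \<noteq> a1" "b \<noteq> a2" using assms ln_props(2,3)[OF assms(1,2,4)] by auto
  show "finite {a1, a2, b}" by simp
  show "card {a1, a2, b} = 3" using ne assms(4) by simp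
  show "rank_base X L (hull {a1, a2, b}) {a1, a2, b}"
    unfolding rank_base_def
  proof (intro conjI allI impI)
    show "{a1, a2, b} \<subseteq> X" using assms by simp
    show "hull {a1, a2, b} \<subseteq> hull {a1, a2, b}" by simp
    fix C assume C: "C \<subseteq> X \<and> hull {a1, a2, b} \<subseteq> hull C"
    show "|{a1, a2, b}| \<le>o |C|"
    proof (cases "finite C")
      case False
      have "finite {a1, a2, b}" by simp
      from fin_le_inf[OF this False] show ?thesis .
    next
      case True
      have sub: "{a1, a2, b} \<subseteq> hull C" using C hull_sup[of "{a1,a2,b}"] by blast
      have "card {a1, a2, b} \<le> card C"
      proof (rule ccontr)
        assume "\<not> card {a1, a2, b} \<le> card C"
        then have "card C \<le> 2" using ne assms(4) by simp
        then have "b \<in> ln a1 a2"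
          using small_coll[of C a1 a2 b] True C sub assms(4) by simp
        then show False using assms(5) by simp
      qed
      then show ?thesis using fin_ordLeq_iff[of "{a1,a2,b}" C] True by simp
    qed
  qed
qed

lemma mod_nodisj:
  assumes "modular_liner X L"
  shows "no_disjoint_coplanar_lines X L"
  unfolding no_disjoint_coplanar_lines_def
proof
  assume "\<exists>l1\<in>L. \<exists>l2\<in>L. coplanar X L l1 l2 \<and> l1 \<inter> l2 = {}"
  then obtain l1 l2 P where l: "l1 \<in> L" "l2 \<in> L" "plane X L P" "l1 \<subseteq> P" "l2 \<subseteq> P" "l1 \<inter> l2 = {}"
    unfolding coplanar_def by blast
  obtain x y where xy: "x \<in> l1" "y \<in> l1" "x \<noteq> y" using L_two l by blast
  obtain z w where zw: "z \<in> l2" "w \<in> l2" "z \<noteq> w" using L_two l by blast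
  have X: "x \<in> X" "y \<in> X" "z \<in> X" "w \<in> X" using xy zw L_sub[OF l(1)] L_sub[OF l(2)] by auto
  have e1: "ln x y = l1" using ln_unique l xy by blast
  have e2: "ln z w = l2" using ln_unique l zw by blast
  have f1: "flat X L l1" using flat_ln X xy e1 by metis
  have f2: "flat X L l2" using flat_ln X zw e2 by metis
  have r1: "rank_base X L l1 {x,y}" using rank_base_line X xy e1 by metis
  have r2: "rank_base X L l2 {z,w}" using rank_base_line X zw e2 by metis
  have rI: "rank_base X L (l1 \<inter> l2) {}" unfolding rank_base_def using l card_of_empty by auto
  obtain BU where rU: "rank_base X L (l1 \<union> l2) BU"
    using rank_base_exists l L_sub by (meson Un_least)
  obtain BP where BP: "rank_base X L P BP" "finite BP" "card BP = 3" using l unfolding plane_def by blast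
  have "l1 \<union> l2 \<subseteq> hull BP" using BP l unfolding rank_base_def by blast
  then have "|BU| \<le>o |BP|" using rU BP unfolding rank_base_def by blast
  then have fU: "finite BU" and cU: "card BU \<le> 3" using BP card_of_ordLeq_finite fin_ordLeq_iff by metis+
  have "( |{}::'a set| +c |BU|, |{x,y}| +c |{z,w}| ) \<in> ordIso"
    using assms[unfolded modular_liner_def, rule_format, of l1 l2 "{x,y}" "{z,w}" "{}" BU] f1 f2 r1 r2 rI rU by blast
  then have "|({}::'a set) <+> BU| =o |{x,y} <+> {z,w}|" unfolding csum_def Field_card_of by simp
  then have "card (({}::'a set) <+> BU) = card ({x,y} <+> {z,w})"
    using fin_ordIso_iff fU by (metis finite.emptyI finite_Plus finite.insertI)
  then have "card BU = 4" using xy zw fU card_Plus[of "{}::'a set" BU] card_Plus[of "{x,y}" "{z,w}"] by simp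
  then show False using cU by simp
qed

lemma nodisj_SR:
  assumes "no_disjoint_coplanar_lines X L"
  shows "strongly_regular X L"
  unfolding strongly_regular_def
proof (intro allI impI)
  fix A b assume a: "flat X L A \<and> A \<noteq> {} \<and> b \<in> X - A"
  have Af: "flat X L A" and Ane: "A \<noteq> {}" and bX: "b \<in> X" and bA: "b \<notin> A" using a by auto
  have AX: "A \<subseteq> X" using Af unfolding flat_def by (rule conjunct1)
  have ab: "\<And>a. a \<in> A \<Longrightarrow> a \<noteq> b" using bA by blast
  have aX: "\<And>a. a \<in> A \<Longrightarrow> a \<in> X" using AX by blast
  have lp1: "\<And>a. a \<in> A \<Longrightarrow> a \<in> ln a b" using ln_props(2)[OF aX bX ab] by blast
  have lp2: "\<And>a. a \<in> A \<Longrightarrow> b \<in> ln a b" using ln_props(3)[OF aX bX ab] by blast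
  have lsub: "\<And>a. a \<in> A \<Longrightarrow> ln a b \<subseteq> X" using ln_sub[OF aX bX ab] by blast
  let ?S = "\<Union>a\<in>A. ln a b"
  have Hf: "flat X L (hull (A \<union> {b}))" using AX bX hull_flat by simp
  have Hs: "A \<union> {b} \<subseteq> hull (A \<union> {b})" by (rule hull_sup)
  show "hull (A \<union> {b}) = ?S"
  proof
    show "?S \<subseteq> hull (A \<union> {b})"
    proof (rule UN_least)
      fix a assume "a \<in> A"
      then show "ln a b \<subseteq> hull (A \<union> {b})" using ln_in_flat[OF Hf _ _ ab] Hs by blast
    qed
    show "hull (A \<union> {b}) \<subseteq> ?S"
    proof (rule hull_min)
      obtain a0 where "a0 \<in> A" using Ane by blast
      then show "A \<union> {b} \<subseteq> ?S" using lp1 lp2 by blast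
      show "flat X L ?S"
        unfolding flat_def
      proof (intro conjI ballI impI)
        show "?S \<subseteq> X" using lsub by blast
        fix x y assume x: "x \<in> ?S" and y: "y \<in> ?S" and xy: "x \<noteq> y"
        show "ln x y \<subseteq> ?S"
        proof
        fix z assume z: "z \<in> ln x y"
        obtain a1 where a1: "a1 \<in> A" "x \<in> ln a1 b" using x by blast
        obtain a2 where a2: "a2 \<in> A" "y \<in> ln a2 b" using y by blast
        have X1: "a1 \<in> X" using aX a1(1) .
        have X2: "a2 \<in> X" using aX a2(1) .
        show "z \<in> ?S"
        proof (cases "a1 = a2")
          case True
          have "ln x y \<subseteq> ln a1 b"
            using ln_in_flat[OF flat_ln[OF X1 bX ab[OF a1(1)]] a1(2) _ xy] a2(2) True by blast
          then show ?thesis using z a1(1) by blast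
        next
          case False
          have lA: "ln a1 a2 \<subseteq> A" using ln_in_flat[OF Af a1(1) a2(1) False] .
          then have bn: "b \<notin> ln a1 a2" using bA by blast
          let ?P = "hull {a1, a2, b}"
          have P: "plane X L ?P" using plane_hull3[OF X1 X2 bX False bn] .
          have Pf: "flat X L ?P" using hull_flat X1 X2 bX by simp
          have Ps: "a1 \<in> ?P" "a2 \<in> ?P" "b \<in> ?P" using hull_sup[of "{a1,a2,b}"] by auto
          have "ln a1 b \<subseteq> ?P" using ln_in_flat[OF Pf Ps(1) Ps(3) ab[OF a1(1)]] .
          then have xP: "x \<in> ?P" using a1(2) by blast
          have "ln a2 b \<subseteq> ?P" using ln_in_flat[OF Pf Ps(2) Ps(3) ab[OF a2(1)]] .
          then have yP: "y \<in> ?P" using a2(2) by blast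
          have zP: "z \<in> ?P" using ln_in_flat[OF Pf xP yP xy] z by blast
          show ?thesis
          proof (cases "z = b")
            case True then show ?thesis using a1(1) lp2 by blast
          next
            case False
            have PX: "?P \<subseteq> X" using hull_X X1 X2 bX by simp
            have zX: "z \<in> X" using zP PX by blast
            have l1: "ln z b \<in> L" "ln z b \<subseteq> ?P"
              using ln_props(1)[OF zX bX False] ln_in_flat[OF Pf zP Ps(3) False] by auto
            have l2: "ln a1 a2 \<in> L" "ln a1 a2 \<subseteq> ?P"
              using ln_props(1)[OF X1 X2 \<open>a1 \<noteq> a2\<close>] ln_in_flat[OF Pf Ps(1) Ps(2) \<open>a1 \<noteq> a2\<close>] by auto
            have "coplanar X L (ln z b) (ln a1 a2)" unfolding coplanar_def using P l1(2) l2(2) by blast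
            then have "ln z b \<inter> ln a1 a2 \<noteq> {}"
              using assms l1(1) l2(1) unfolding no_disjoint_coplanar_lines_def by blast
            then obtain a3 where a3: "a3 \<in> ln z b" "a3 \<in> ln a1 a2" by blast
            have a3A: "a3 \<in> A" using a3(2) lA by blast
            have "ln a3 b = ln z b"
              using ln_unique[OF l1(1) a3(1) ln_props(3)[OF zX bX False] ab[OF a3A]] .
            then have "z \<in> ln a3 b" using ln_props(2)[OF zX bX False] by simp
            then show ?thesis using a3A by blast
          qed
        qed
        qed
      qed
    qed
  qed
qed

lemma rb_X: "rank_base X L S B \<Longrightarrow> B \<subseteq> X" unfolding rank_base_def by simp
lemma rb_span: "rank_base X L S B \<Longrightarrow> S \<subseteq> hull B" unfolding rank_base_def by simp
lemma rb_min: "rank_base X L S B \<Longrightarrow> C \<subseteq> X \<Longrightarrow> S \<subseteq> hull C \<Longrightarrow> |B| \<le>o |C|"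
  unfolding rank_base_def by simp

definition indep where "indep I \<longleftrightarrow> finite I \<and> I \<subseteq> X \<and> (\<forall>x\<in>I. x \<notin> hull (I - {x}))"

lemma indep_fin: "indep I \<Longrightarrow> finite I" unfolding indep_def by simp
lemma indep_X: "indep I \<Longrightarrow> I \<subseteq> X" unfolding indep_def by simp
lemma indep_nin: "indep I \<Longrightarrow> x \<in> I \<Longrightarrow> x \<notin> hull (I - {x})" unfolding indep_def by simp

lemma indep_mono:
  assumes "indep I" "J \<subseteq> I" shows "indep J"
  unfolding indep_def
proof (intro conjI ballI)
  show "finite J" using finite_subset[OF assms(2) indep_fin[OF assms(1)]] .
  show "J \<subseteq> X" using assms(2) indep_X[OF assms(1)] by (rule order_trans)
  fix x assume x: "x \<in> J"
  have "hull (J - {x}) \<subseteq> hull (I - {x})"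
    by (rule hull_mono) (use assms(2) indep_X[OF assms(1)] in auto)
  then show "x \<notin> hull (J - {x})" using indep_nin[OF assms(1)] x assms(2) by blast
qed

lemma indep_empty: "indep {}" unfolding indep_def by simp

end

locale srlin = lin +
  assumes sr: "strongly_regular X L"
begin

lemma sr_eq:
  assumes "flat X L A" "A \<noteq> {}" "b \<in> X" "b \<notin> A"
  shows "hull (A \<union> {b}) = (\<Union>a\<in>A. ln a b)"
proof -
  have "flat X L A \<and> A \<noteq> {} \<and> b \<in> X - A" using assms by simp
  then show ?thesis using sr unfolding strongly_regular_def by simp
qed

lemma exch:
  assumes SX: "S \<subseteq> X" and bX: "b \<in> X" and c1: "c \<in> hull (S \<union> {b})" and c2: "c \<notin> hull S"
  shows "b \<in> hull (S \<union> {c})"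
proof (cases "S = {}")
  case True
  then have "c = b" using c1 hull_single[OF bX] by simp
  then show ?thesis using hull_sup[of "S \<union> {c}"] by simp
next
  case False
  let ?F = "hull S"
  have Ff: "flat X L ?F" using hull_flat[OF SX] .
  have Fne: "?F \<noteq> {}" using False hull_sup[of S] by blast
  have bF: "b \<notin> ?F"
  proof
    assume "b \<in> ?F"
    then have "S \<union> {b} \<subseteq> ?F" using hull_sup[of S] by blast
    then have "hull (S \<union> {b}) \<subseteq> ?F" using hull_min[OF Ff] by blast
    then show False using c1 c2 by blast
  qed
  have "hull (S \<union> {b}) = hull (?F \<union> {b})" using hull_Un_hull[of S "{b}"] SX bX by simp
  also have "\<dots> = (\<Union>a\<in>?F. ln a b)" using sr_eq[OF Ff Fne bX bF] .
  finally obtain a where a: "a \<in> ?F" "c \<in> ln a b" using c1 by blast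
  have aX: "a \<in> X" using a(1) hull_X[OF SX] by blast
  have ab: "a \<noteq> b" using a(1) bF by blast
  have ca: "c \<noteq> a" using a(1) c2 by blast
  have cX: "c \<in> X" using ln_sub[OF aX bX ab] a(2) by blast
  show ?thesis
  proof (cases "c = b")
    case True then show ?thesis using hull_sup[of "S \<union> {c}"] by simp
  next
    case False
    have e: "ln a c = ln a b" using ln_eq[OF aX bX ab ln_props(2)[OF aX bX ab] a(2) ca[symmetric]] .
    have SX': "S \<union> {c} \<subseteq> X" using SX cX by simp
    have Gf: "flat X L (hull (S \<union> {c}))" using hull_flat[OF SX'] .
    have "?F \<subseteq> hull (S \<union> {c})" by (rule hull_mono[OF _ SX']) blast
    then have aG: "a \<in> hull (S \<union> {c})" using a(1) by blast
    have cG: "c \<in> hull (S \<union> {c})" using hull_sup[of "S \<union> {c}"] by simp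
    have "ln a c \<subseteq> hull (S \<union> {c})" using ln_in_flat[OF Gf aG cG ca[symmetric]] .
    then show ?thesis using e ln_props(3)[OF aX bX ab] by blast
  qed
qed

lemma indep_insert:
  assumes ind: "indep I" and cX: "c \<in> X" and ch: "c \<notin> hull I"
  shows "indep (insert c I)"
  unfolding indep_def
proof (intro conjI ballI)
  show "finite (insert c I)" using indep_fin[OF ind] by simp
  show "insert c I \<subseteq> X" using indep_X[OF ind] cX by simp
  have cI: "c \<notin> I" using ch hull_sup[of I] by blast
  fix x assume x: "x \<in> insert c I"
  show "x \<notin> hull (insert c I - {x})"
  proof (cases "x = c")
    case True
    then have "insert c I - {x} = I" using cI by simp
    then show ?thesis using ch True by simp
  next
    case False
    then have xI: "x \<in> I" using x by simp
    have IX: "I - {x} \<subseteq> X" using indep_X[OF ind] by blast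
    have n: "x \<notin> hull (I - {x})" using indep_nin[OF ind xI] .
    have e1: "insert c I - {x} = (I - {x}) \<union> {c}" using False by blast
    have e2: "(I - {x}) \<union> {x} = I" using xI by blast
    show ?thesis
    proof
      assume "x \<in> hull (insert c I - {x})"
      then have "x \<in> hull ((I - {x}) \<union> {c})" using e1 by simp
      then have "c \<in> hull ((I - {x}) \<union> {x})" using exch[OF IX cX _ n] by simp
      then show False using ch e2 by simp
    qed
  qed
qed

lemma steinitz:
  assumes fC: "finite C" and CX: "C \<subseteq> X"
  shows "indep I \<Longrightarrow> I \<subseteq> hull C \<Longrightarrow> card I \<le> card C"
proof (induction "card (I - C)" arbitrary: I rule: less_induct)
  case less
  note IH = less.hyps and ind = less.prems(1) and sub = less.prems(2)
  have fI: "finite I" using indep_fin[OF ind] .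
  have IX: "I \<subseteq> X" using indep_X[OF ind] .
  show ?case
  proof (cases "I \<subseteq> C")
    case True then show ?thesis using card_mono[OF fC] by simp
  next
    case False
    then obtain x where x: "x \<in> I" "x \<notin> C" by blast
    have n: "x \<notin> hull (I - {x})" using indep_nin[OF ind x(1)] .
    have IX': "I - {x} \<subseteq> X" using IX by blast
    have "\<not> C \<subseteq> hull (I - {x})"
    proof
      assume "C \<subseteq> hull (I - {x})"
      then have "hull C \<subseteq> hull (I - {x})" using hull_min[OF hull_flat[OF IX']] by simp
      then show False using n x(1) sub by blast
    qed
    then obtain c where c: "c \<in> C" "c \<notin> hull (I - {x})" by blast
    have cX: "c \<in> X" using c(1) CX by blast
    have cI: "c \<notin> I" using c(2) x(2) c(1) hull_sup[of "I - {x}"] by blast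
    let ?I = "insert c (I - {x})"
    have ind2: "indep ?I" using indep_insert[OF indep_mono[OF ind] cX c(2)] by blast
    have sub2: "?I \<subseteq> hull C" using sub c(1) hull_sup[of C] by blast
    have eqd: "?I - C = (I - C) - {x}" using c(1) by blast
    have xin: "x \<in> I - C" using x by simp
    have fin: "finite (I - C)" using fI by simp
    have "card ((I - C) - {x}) < card (I - C)" by (rule card_Diff1_less[OF fin xin])
    then have "card (?I - C) < card (I - C)" using eqd by simp
    then have "card ?I \<le> card C" using IH ind2 sub2 by blast
    moreover have "card ?I = card I"
    proof -
      have "card ?I = Suc (card (I - {x}))" using cI fI by simp
      also have "\<dots> = card I" using card_Suc_Diff1[OF fI x(1)] .
      finally show ?thesis .
    qed
    ultimately show ?thesis by simp
  qed
qed

lemma extend: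
  assumes "finite C" "C \<subseteq> X" "A \<subseteq> hull C" "A \<subseteq> X"
  shows "indep I0 \<Longrightarrow> I0 \<subseteq> A \<Longrightarrow> \<exists>I. I0 \<subseteq> I \<and> I \<subseteq> A \<and> indep I \<and> A \<subseteq> hull I"
proof (induction "card C - card I0" arbitrary: I0 rule: less_induct)
  case less
  note IH = less.hyps and p = less.prems
  show ?case
  proof (cases "A \<subseteq> hull I0")
    case True
    have "I0 \<subseteq> I0 \<and> I0 \<subseteq> A \<and> indep I0 \<and> A \<subseteq> hull I0" using p True by simp
    then show ?thesis by (rule exI)
  next
    case False
    then obtain a where a: "a \<in> A" "a \<notin> hull I0" by blast
    let ?I = "insert a I0"
    have aX: "a \<in> X" using a assms(4) by blast
    have ind: "indep ?I" using indep_insert[OF p(1) aX a(2)] .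
    have sub: "?I \<subseteq> A" using p(2) a(1) by simp
    have sub2: "?I \<subseteq> hull C" using sub assms(3) by (rule order_trans)
    have c1: "card ?I \<le> card C" using steinitz[OF assms(1,2) ind sub2] .
    have aI: "a \<notin> I0" using a(2) hull_sup by blast
    have fI: "finite I0" using indep_fin[OF p(1)] .
    have "card ?I = Suc (card I0)" using aI fI by simp
    then have lt: "card C - card ?I < card C - card I0" using c1 by simp
    obtain I where I: "?I \<subseteq> I \<and> I \<subseteq> A \<and> indep I \<and> A \<subseteq> hull I" using IH[OF lt ind sub] by (elim exE)
    then have "I0 \<subseteq> I \<and> I \<subseteq> A \<and> indep I \<and> A \<subseteq> hull I" by blast
    then show ?thesis by (rule exI)
  qed
qed

lemma rank_fin:
  assumes "rank_base X L S BS" "S \<subseteq> X" "indep I" "I \<subseteq> hull S" "S \<subseteq> hull I"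
  shows "finite BS \<and> card BS = card I"
proof -
  have BS: "BS \<subseteq> X" "S \<subseteq> hull BS" and mn: "\<And>C. C \<subseteq> X \<and> S \<subseteq> hull C \<Longrightarrow> |BS| \<le>o |C|"
    using assms(1) unfolding rank_base_def by simp_all
  have IX: "finite I" "I \<subseteq> X" using indep_fin[OF assms(3)] indep_X[OF assms(3)] by auto
  have le: "|BS| \<le>o |I|" using mn IX(2) assms(5) by blast
  then have fB: "finite BS" using card_of_ordLeq_finite IX(1) by blast
  then have c1: "card BS \<le> card I" using fin_ordLeq_iff IX(1) le by blast
  have "hull S \<subseteq> hull BS" using hull_min[OF hull_flat[OF BS(1)] BS(2)] .
  then have "I \<subseteq> hull BS" using assms(4) by (rule order_trans[rotated])
  then have "card I \<le> card BS" using steinitz[OF fB BS(1) assms(3)] by blast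
  then show ?thesis using c1 fB by simp
qed

lemma modlaw:
  assumes Af: "flat X L A" and Bf: "flat X L B"
  shows "finite S \<Longrightarrow> S \<subseteq> B \<Longrightarrow> hull (A \<union> S) \<inter> B \<subseteq> hull ((A \<inter> B) \<union> S)"
proof (induction S rule: finite_induct)
  case empty
  have "hull (A \<union> {}) = A" using hull_of_flat[OF Af] by simp
  moreover have "A \<inter> B \<subseteq> hull ((A \<inter> B) \<union> {})" using hull_sup[of "A \<inter> B"] by simp
  ultimately show ?case by blast
next
  case (insert s S)
  have AX: "A \<subseteq> X" using Af unfolding flat_def by (rule conjunct1)
  have BX: "B \<subseteq> X" using Bf unfolding flat_def by (rule conjunct1)
  have sSB: "insert s S \<subseteq> B" using insert.prems .
  have SB: "S \<subseteq> B" and sB: "s \<in> B" using sSB by auto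
  have SX: "S \<subseteq> X" using SB BX by (rule order_trans)
  have sX: "s \<in> X" using sB BX by blast
  let ?F = "hull (A \<union> S)"
  let ?G = "hull ((A \<inter> B) \<union> insert s S)"
  let ?G' = "hull ((A \<inter> B) \<union> S)"
  have ASX: "A \<union> S \<subseteq> X" using AX SX by simp
  have GX: "(A \<inter> B) \<union> insert s S \<subseteq> X" using AX SX sX by blast
  have Ff: "flat X L ?F" using hull_flat[OF ASX] .
  have Gf: "flat X L ?G" using hull_flat[OF GX] .
  have GG: "?G' \<subseteq> ?G" by (rule hull_mono[OF _ GX]) blast
  have IH: "?F \<inter> B \<subseteq> ?G'" using insert.IH[OF SB] .
  have sG: "s \<in> ?G" using hull_sup[of "(A \<inter> B) \<union> insert s S"] by blast
  have e0: "hull (hull (A \<union> S) \<union> {s}) = hull ((A \<union> S) \<union> {s})" using hull_Un_hull[OF ASX, of "{s}"] sX by blast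
  have e1: "(A \<union> S) \<union> {s} = A \<union> insert s S" by blast
  have e: "hull (A \<union> insert s S) = hull (?F \<union> {s})" using e0 e1 by simp
  show ?case
  proof
    fix y assume y: "y \<in> hull (A \<union> insert s S) \<inter> B"
    then have yH: "y \<in> hull (?F \<union> {s})" and yB: "y \<in> B" using e by simp_all
    show "y \<in> ?G"
    proof (cases "s \<in> ?F")
      case True
      then have "?F \<union> {s} = ?F" by blast
      then have "hull (?F \<union> {s}) = ?F" using hull_of_flat[OF Ff] by simp
      then have "y \<in> ?F \<inter> B" using yH yB by simp
      then show ?thesis using IH GG by blast
    next
      case sF: False
      show ?thesis
      proof (cases "?F = {}")
        case True
        then have "y \<in> hull {s}" using yH by simp
        then have "y = s" using hull_single[OF sX] by simp
        then show ?thesis using sG by simp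
      next
        case False
        have "y \<in> (\<Union>f\<in>?F. ln f s)" using sr_eq[OF Ff False sX sF] yH by simp
        then obtain f where f: "f \<in> ?F" "y \<in> ln f s" by blast
        have fX: "f \<in> X" using f(1) hull_X[OF ASX] by blast
        have fs: "f \<noteq> s" using f(1) sF by blast
        consider "y = s" | "y = f" | "y \<noteq> s" "y \<noteq> f" by blast
        then show ?thesis
        proof cases
          case 1 then show ?thesis using sG by simp
        next
          case 2
          then have "y \<in> ?F \<inter> B" using f(1) yB by simp
          then show ?thesis using IH GG by blast
        next
          case 3
          have "ln y s = ln f s" using ln_eq[OF fX sX fs f(2) ln_props(3)[OF fX sX fs] 3(1)] .
          then have "f \<in> ln y s" using ln_props(2)[OF fX sX fs] by simp
          moreover have "ln y s \<subseteq> B" using ln_in_flat[OF Bf yB sB 3(1)] .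
          ultimately have "f \<in> ?F \<inter> B" using f(1) by blast
          then have fG: "f \<in> ?G" using IH GG by blast
          have "ln f s \<subseteq> ?G" using ln_in_flat[OF Gf fG sG fs] .
          then show ?thesis using f(2) by blast
        qed
      qed
    qed
  qed
qed

lemma sr_modular: "modular_liner X L"
  unfolding modular_liner_def
proof (intro allI impI)
  fix A B BA BB BI BU
  assume H: "flat X L A \<and> flat X L B \<and> rank_base X L A BA \<and> rank_base X L B BB \<and>
        rank_base X L (A \<inter> B) BI \<and> rank_base X L (A \<union> B) BU"
  have Af: "flat X L A" using H by simp
  have Bf: "flat X L B" using H by simp
  have rA: "rank_base X L A BA" using H by simp
  have rB: "rank_base X L B BB" using H by simp
  have rI: "rank_base X L (A \<inter> B) BI" using H by simp
  have rU: "rank_base X L (A \<union> B) BU" using H by simp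
  have AX: "A \<subseteq> X" using Af unfolding flat_def by (rule conjunct1)
  have BX: "B \<subseteq> X" using Bf unfolding flat_def by (rule conjunct1)
  have BAX: "BA \<subseteq> X" using rb_X[OF rA] .
  have BBX: "BB \<subseteq> X" using rb_X[OF rB] .
  have BUX: "BU \<subseteq> X" using rb_X[OF rU] .
  have sA: "A \<subseteq> hull BA" using rb_span[OF rA] .
  have sB: "B \<subseteq> hull BB" using rb_span[OF rB] .
  have sU: "A \<union> B \<subseteq> hull BU" using rb_span[OF rU] .
  have cIA: "|BI| \<le>o |BA|" using rb_min[OF rI BAX] sA by blast
  have cAU: "|BA| \<le>o |BU|" using rb_min[OF rA BUX] sU by blast
  have cBU: "|BB| \<le>o |BU|" using rb_min[OF rB BUX] sU by blast
  have BABX: "BA \<union> BB \<subseteq> X" using BAX BBX by simp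
  have "hull BA \<subseteq> hull (BA \<union> BB)" by (rule hull_mono[OF _ BABX]) simp
  moreover have "hull BB \<subseteq> hull (BA \<union> BB)" by (rule hull_mono[OF _ BABX]) simp
  ultimately have "A \<union> B \<subseteq> hull (BA \<union> BB)" using sA sB by blast
  then have cUAB: "|BU| \<le>o |BA \<union> BB|" using rb_min[OF rU BABX] by blast
  show "|BI| +c |BU| =o |BA| +c |BB|"
  proof (cases "finite BU")
    case False
    have ci: "cinfinite |BU|" unfolding cinfinite_def Field_card_of using False .
    have L1: "|BI| +c |BU| =o |BU|"
      using csum_absorb2'[OF card_of_Card_order ordLeq_transitive[OF cIA cAU]] ci by blast
    have L2: "|BU| \<le>o |BA| +c |BB|" using ordLeq_transitive[OF cUAB Un_csum] .
    have L3: "|BA| +c |BB| \<le>o |BU| +c |BU|" using csum_mono[OF cAU cBU] .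
    have L4: "|BU| +c |BU| =o |BU|"
      using csum_absorb2'[OF card_of_Card_order ordLeq_reflexive[OF card_of_Well_order]] ci by blast
    have L5: "|BA| +c |BB| \<le>o |BU|" using ordLeq_ordIso_trans[OF L3 L4] .
    have R: "|BA| +c |BB| =o |BU|" using ordIso_iff_ordLeq L2 L5 by blast
    show ?thesis using ordIso_transitive[OF L1 ordIso_symmetric[OF R]] .
  next
    case True
    note fU = True
    have fA: "finite BA" using card_of_ordLeq_finite[OF cAU fU] .
    have fB: "finite BB" using card_of_ordLeq_finite[OF cBU fU] .
    have fI: "finite BI" using card_of_ordLeq_finite[OF cIA fA] .
    have ABX: "A \<inter> B \<subseteq> X" using AX by blast
    have sIU: "A \<inter> B \<subseteq> hull BU" using sU by blast
    have sAU: "A \<subseteq> hull BU" using sU by blast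
    have sBU: "B \<subseteq> hull BU" using sU by blast
    obtain I where I: "I \<subseteq> A \<inter> B" "indep I" "A \<inter> B \<subseteq> hull I"
      using extend[OF fU BUX sIU ABX indep_empty] by blast
    have IA: "I \<subseteq> A" and IB: "I \<subseteq> B" using I(1) by auto
    obtain I1 where I1: "I \<subseteq> I1" "I1 \<subseteq> A" "indep I1" "A \<subseteq> hull I1"
      using extend[OF fU BUX sAU AX I(2) IA] by blast
    obtain I2 where I2: "I \<subseteq> I2" "I2 \<subseteq> B" "indep I2" "B \<subseteq> hull I2"
      using extend[OF fU BUX sBU BX I(2) IB] by blast
    define K where "K = I2 - I"
    have I1X: "I1 \<subseteq> X" using indep_X[OF I1(3)] .
    have I2X: "I2 \<subseteq> X" using indep_X[OF I2(3)] .
    have IX: "I \<subseteq> X" using indep_X[OF I(2)] .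
    have fI1: "finite I1" using indep_fin[OF I1(3)] .
    have fI2: "finite I2" using indep_fin[OF I2(3)] .
    have fK: "finite K" unfolding K_def using fI2 by simp
    have hA: "hull I1 = A" using hull_min[OF Af I1(2)] I1(4) by blast
    have indK: "K' \<subseteq> K \<Longrightarrow> indep (I1 \<union> K')" if fK': "finite K'" for K'
      using fK'
    proof (induction K' rule: finite_induct)
      case empty then show ?case using I1(3) by simp
    next
      case (insert k K')
      have kK: "k \<in> K" and KK: "K' \<subseteq> K" using insert.prems by auto
      have kI2: "k \<in> I2" and kI: "k \<notin> I" using kK unfolding K_def by auto
      have kB: "k \<in> B" using kI2 I2(2) by blast
      have kX: "k \<in> X" using kI2 I2X by blast
      have K'I2: "K' \<subseteq> I2" using KK unfolding K_def by blast
      have K'X: "K' \<subseteq> X" using K'I2 I2X by blast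
      have K'B: "K' \<subseteq> B" using K'I2 I2(2) by blast
      have ind0: "indep (I1 \<union> K')" using insert.IH KK by blast
      have nk: "k \<notin> hull (I1 \<union> K')"
      proof
        assume k1: "k \<in> hull (I1 \<union> K')"
        have "hull (hull I1 \<union> K') = hull (I1 \<union> K')" using hull_Un_hull[OF I1X K'X] .
        then have "k \<in> hull (A \<union> K')" using k1 hA by simp
        then have "k \<in> hull (A \<union> K') \<inter> B" using kB by simp
        then have k2: "k \<in> hull ((A \<inter> B) \<union> K')" using modlaw[OF Af Bf insert.hyps(1) K'B] by blast
        have IK'X: "I \<union> K' \<subseteq> X" using IX K'X by simp
        have "hull I \<subseteq> hull (I \<union> K')" by (rule hull_mono[OF _ IK'X]) simp
        then have "(A \<inter> B) \<union> K' \<subseteq> hull (I \<union> K')" using I(3) hull_sup[of "I \<union> K'"] by blast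
        then have h1: "hull ((A \<inter> B) \<union> K') \<subseteq> hull (I \<union> K')" using hull_min[OF hull_flat[OF IK'X]] by blast
        have I2kX: "I2 - {k} \<subseteq> X" using I2X by blast
        have "I \<union> K' \<subseteq> I2 - {k}" using I2(1) K'I2 kI insert.hyps(2) by blast
        then have h2: "hull (I \<union> K') \<subseteq> hull (I2 - {k})" using hull_mono[OF _ I2kX] by blast
        have "k \<in> hull (I2 - {k})" using k2 h1 h2 by blast
        then show False using indep_nin[OF I2(3) kI2] by blast
      qed
      have "indep (insert k (I1 \<union> K'))" using indep_insert[OF ind0 kX nk] .
      then show ?case by simp
    qed
    let ?U = "I1 \<union> K"
    have indU: "indep ?U" using indK[OF fK] by simp
    have disj: "I1 \<inter> K = {}"
    proof (rule ccontr)
      assume "I1 \<inter> K \<noteq> {}"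
      then obtain x where x: "x \<in> I1" "x \<in> K" by blast
      have xI2: "x \<in> I2" and xI: "x \<notin> I" using x(2) unfolding K_def by auto
      have "x \<in> A \<inter> B" using x(1) I1(2) xI2 I2(2) by blast
      then have "x \<in> hull I" using I(3) by blast
      moreover have "hull I \<subseteq> hull (I2 - {x})"
        by (rule hull_mono) (use I2(1) xI I2X in auto)
      ultimately show False using indep_nin[OF I2(3) xI2] by blast
    qed
    have I2eq: "I2 = I \<union> K" unfolding K_def using I2(1) by blast
    have disj2: "I \<inter> K = {}" unfolding K_def by blast
    have fIs: "finite I" using indep_fin[OF I(2)] .
    have cU: "card ?U = card I1 + card K" using card_Un_disjoint[OF fI1 fK disj] .
    have cI2: "card I2 = card I + card K" using card_Un_disjoint[OF fIs fK disj2] I2eq by simp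
    have UX: "?U \<subseteq> X" using indep_X[OF indU] .
    have "hull I1 \<subseteq> hull ?U" by (rule hull_mono[OF _ UX]) simp
    moreover have "hull I2 \<subseteq> hull ?U" by (rule hull_mono[OF _ UX]) (use I2eq I1(1) in blast)
    ultimately have spanU: "A \<union> B \<subseteq> hull ?U" using hA I2(4) by blast
    have "?U \<subseteq> A \<union> B" using I1(2) I2(2) unfolding K_def by blast
    then have UinAB: "?U \<subseteq> hull (A \<union> B)" using hull_sup[of "A \<union> B"] by blast
    have ABX2: "A \<union> B \<subseteq> X" using AX BX by simp
    have e1: "card BI = card I"
      using rank_fin[OF rI ABX I(2) _ I(3)] I(1) hull_sup[of "A \<inter> B"] by blast
    have e2: "card BA = card I1"
      using rank_fin[OF rA AX I1(3) _ I1(4)] I1(2) hull_sup[of A] by blast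
    have e3: "card BB = card I2"
      using rank_fin[OF rB BX I2(3) _ I2(4)] I2(2) hull_sup[of B] by blast
    have e4: "card BU = card ?U"
      using rank_fin[OF rU ABX2 indU UinAB spanU] by blast
    have "card (BI <+> BU) = card (BA <+> BB)"
      using card_Plus[OF fI fU] card_Plus[OF fA fB] e1 e2 e3 e4 cU cI2 by simp
    then have "|BI <+> BU| =o |BA <+> BB|"
      using fin_ordIso_iff[of "BI <+> BU" "BA <+> BB"] fI fU fA fB by simp
    then show ?thesis unfolding csum_def Field_card_of .
  qed
qed

end

theorem theorem5p5p1:
  fixes X :: "'a set" and L :: "'a set set"
  assumes "liner X L"
  shows "(modular_liner X L \<longleftrightarrow> strongly_regular X L) \<and>
         (strongly_regular X L \<longleftrightarrow> no_disjoint_coplanar_lines X L)"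
proof -
  interpret lin X L using assms by (unfold_locales)
  have a: "modular_liner X L \<Longrightarrow> no_disjoint_coplanar_lines X L" by (rule mod_nodisj)
  have b: "no_disjoint_coplanar_lines X L \<Longrightarrow> strongly_regular X L" by (rule nodisj_SR)
  have c: "strongly_regular X L \<Longrightarrow> modular_liner X L"
  proof -
    assume "strongly_regular X L"
    then interpret srlin X L by unfold_locales
    show "modular_liner X L" by (rule sr_modular)
  qed
  show ?thesis using a b c by blast
qed

end
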